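(* Let $N$ be a well-formed system (coherent and $\vdash N:\mathbf{ok}$) in the calculus with DFA entry policies. If $N\to N'$, then $N'$ is well-formed; in particular $\vdash N':\mathbf{ok}$.
   Context: Fix disjoint sets $\mathsf{Act}$ (actions) and $\mathsf{Loc}$ (localities). A policy is a minimal DFA $A=(S,\Sigma,s_0,F,\delta)$ with finite $\Sigma\subseteq\mathsf{Act}\cup\mathsf{Loc}$, $\emptyset\ne F\subseteq S$, $\delta:S\times\Sigma\to S$. $Acp_s(A)$ is the set of words in $\Sigma^*$ leading from $s$ to a final state, $Acp(A)=Acp_{s_0}(A)$, and $A_1\ \mathtt{enforces}\ A_2$ iff $Acp(A_1)\subseteq Acp(A_2)$. Agents: $P ::= \mathbf{nil} \mid a.P \mid \mathbf{go}_A\, l.P \mid P\,|\,Q \mid\ !P$. Concurrent regular expressions $e::=\epsilon\mid\alpha\mid e_1.e_2\mid e_1\odot e_2\mid e^{\otimes}$ with $lang(\epsilon)=\{\epsilon\}$, $lang(\alpha)=\{\alpha\}$, $lang(e_1.e_2)=\{x_1x_2: x_i\in lang(e_i)\}$, $lang(e_1\odot e_2)=\{x_1y_1\cdots x_ny_n : x_1\cdots x_n\in lang(e_1), y_1\cdots y_n\in lang(e_2)\}$ (components may be empty), $lang(e^\otimes)=\bigcup_{i\ge0}L^{\otimes i}$ with $L=lang(e)$, $L^{\otimes0}=\{\epsilon\}$, $L^{\otimes i}=L^{\otimes(i-1)}\odot L$. $\mathrm{CRE}(\mathbf{nil})=\epsilon$, $\mathrm{CRE}(a.P)=a.\mathrm{CRE}(P)$,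 $\mathrm{CRE}(\mathbf{go}_A\,l.P)=l$, $\mathrm{CRE}(P_1|P_2)=\mathrm{CRE}(P_1)\odot\mathrm{CRE}(P_2)$, $\mathrm{CRE}(!P)=\mathrm{CRE}(P)^\otimes$. $\vdash P:A$ iff $lang(\mathrm{CRE}(P))\subseteq Acp(A)$ and $\vdash Q:A'$ for every subterm $\mathbf{go}_{A'}\,l.Q$ of $P$. Systems: $N ::= \mathbf{0} \mid l[\![M \rhd P]\!] \mid N_1\parallel N_2$, site names pairwise distinct; membrane $M=(M_t,M_p)$, $M_t$ a partial function $\mathsf{Loc}\to\{\mathtt{loc},\mathtt{lgood},\mathtt{lbad}\}$, $M_p$ a policy. Structural equivalence: least congruence such that inside a site $|$ is commutative, associative with unit $\mathbf{nil}$, $l[\![M\rhd\ !P|Q]\!]\equiv l[\![M\rhd P|!P|Q]\!]$, and $\parallel$ commutative, associative with unit $\mathbf{0}$. Reduction: (act) $l[\![M\rhd a.P|Q]\!]\to l[\![M\rhd P|Q]\!]$; (par) $N_1\to N_1'$ implies $N_1\parallel N_2\to N_1'\parallel N_2$; (struct) $N\equiv N_1\to N_1'\equiv N'$ implies $N\to N'$; (mig) $k[\![M^k\rhd\mathbf{go}_A\,l.P|Q]\!]\parallel l[\![M^l\rhd R]\!]\to k[\![M^k\rhd Q]\!]\parallel l[\![M^l\rhd P|R]\!]$ provided: if $M^l_t(k)=\mathtt{lgood}$ then $Acp(A)\subseteq Acp(M^l_p)$, else $\vdash P:M^l_p$. Trust order $<:$ reflexive with $\mathtt{loc}<:\mathtt{lbad}$,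 $\mathtt{loc}<:\mathtt{lgood}$; $k$ trustworthy iff $M^k_t(k)=\mathtt{lgood}$; $N$ coherent iff for every trustworthy $k$ and site $l$ with $M^k_t(l)$ defined, $M^k_t(l)<:M^l_t(l)$. A thread is an agent not of the form $P_1|P_2$. $\vdash N:\mathbf{ok}$: $\vdash\mathbf{0}:\mathbf{ok}$; $\vdash N_1\parallel N_2:\mathbf{ok}$ if both are; $\vdash l[\![M\rhd P_1|\dots|P_n]\!]:\mathbf{ok}$ if $l$ is trustworthy and each $P_i$ is a thread such that there is a state $s$ of $M_p$ with $lang(\mathrm{CRE}(P_i))\subseteq Acp_s(M_p)$, and moreover $\vdash Q:A'$ for every subterm $\mathbf{go}_{A'}\,h.Q$ of $P_i$; $\vdash l[\![M\rhd P]\!]:\mathbf{ok}$ if $l$ not trustworthy. *)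

theory Defs
  imports Main
begin

text \<open>Actions 'a and localities 'l are kept disjoint by a sum type.\<close>
datatype ('a, 'l) sym = SAct 'a | SLoc 'l

type_synonym ('a, 'l) word = "('a, 'l) sym list"

record ('a, 'l) dfa =
  states :: "nat set"
  alpha  :: "('a, 'l) sym set"
  init   :: nat
  final  :: "nat set"
  delta  :: "nat \<Rightarrow> ('a, 'l) sym \<Rightarrow> nat"

definition is_dfa :: "('a, 'l) dfa \<Rightarrow> bool" where
  "is_dfa A \<longleftrightarrow> finite (states A) \<and> finite (alpha A) \<and> init A \<in> states A
     \<and> final A \<noteq> {} \<and> final A \<subseteq> states A
     \<and> (\<forall>s\<in>states A. \<forall>x\<in>alpha A. delta A s x \<in> states A)"

definition Acp_from :: "('a, 'l) dfa \<Rightarrow> nat \<Rightarrow> ('a, 'l) word set" where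
  "Acp_from A s = {w. w \<in> lists (alpha A) \<and> foldl (delta A) s w \<in> final A}"

definition Acp :: "('a, 'l) dfa \<Rightarrow> ('a, 'l) word set" where
  "Acp A = Acp_from A (init A)"

definition enforces :: "('a, 'l) dfa \<Rightarrow> ('a, 'l) dfa \<Rightarrow> bool" where
  "enforces A1 A2 \<longleftrightarrow> Acp A1 \<subseteq> Acp A2"

definition minimal_dfa :: "('a, 'l) dfa \<Rightarrow> bool" where
  "minimal_dfa A \<longleftrightarrow> is_dfa A \<and>
     (\<forall>B :: ('a, 'l) dfa. is_dfa B \<and> alpha B = alpha A \<and> Acp B = Acp A
        \<longrightarrow> card (states A) \<le> card (states B))"

abbreviation policy :: "('a, 'l) dfa \<Rightarrow> bool" where
  "policy A \<equiv> minimal_dfa A"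

datatype ('a, 'l) agent =
    ANil
  | APre 'a "('a, 'l) agent"
  | AGo "('a, 'l) dfa" 'l "('a, 'l) agent"
  | APar "('a, 'l) agent" "('a, 'l) agent"
  | ABang "('a, 'l) agent"

datatype ('a, 'l) cre =
    CEps
  | CSym "('a, 'l) sym"
  | CSeq "('a, 'l) cre" "('a, 'l) cre"
  | CShuf "('a, 'l) cre" "('a, 'l) cre"
  | CStar "('a, 'l) cre"

text \<open>L1 \<odot> L2 = {x1 y1 ... xn yn | x1...xn \<in> L1, y1...yn \<in> L2} (components may be empty).\<close>
definition shuffle_lang :: "'b list set \<Rightarrow> 'b list set \<Rightarrow> 'b list set" where
  "shuffle_lang L1 L2 =
     {concat (map2 (@) xs ys) | xs ys. length xs = length ys \<and> concat xs \<in> L1 \<and> concat ys \<in> L2}"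

fun shuf_pow :: "'b list set \<Rightarrow> nat \<Rightarrow> 'b list set" where
  "shuf_pow L 0 = {[]}"
| "shuf_pow L (Suc i) = shuffle_lang (shuf_pow L i) L"

fun lang :: "('a, 'l) cre \<Rightarrow> ('a, 'l) word set" where
  "lang CEps = {[]}"
| "lang (CSym x) = {[x]}"
| "lang (CSeq e1 e2) = {x1 @ x2 | x1 x2. x1 \<in> lang e1 \<and> x2 \<in> lang e2}"
| "lang (CShuf e1 e2) = shuffle_lang (lang e1) (lang e2)"
| "lang (CStar e) = (\<Union>i. shuf_pow (lang e) i)"

fun CRE :: "('a, 'l) agent \<Rightarrow> ('a, 'l) cre" where
  "CRE ANil = CEps"
| "CRE (APre a P) = CSeq (CSym (SAct a)) (CRE P)"
| "CRE (AGo A l P) = CSym (SLoc l)"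
| "CRE (APar P1 P2) = CShuf (CRE P1) (CRE P2)"
| "CRE (ABang P) = CStar (CRE P)"

fun gos_ok :: "('a, 'l) agent \<Rightarrow> bool" where
  "gos_ok ANil = True"
| "gos_ok (APre a P) = gos_ok P"
| "gos_ok (AGo A l Q) = (lang (CRE Q) \<subseteq> Acp A \<and> gos_ok Q)"
| "gos_ok (APar P1 P2) = (gos_ok P1 \<and> gos_ok P2)"
| "gos_ok (ABang P) = gos_ok P"

definition agent_typed :: "('a, 'l) agent \<Rightarrow> ('a, 'l) dfa \<Rightarrow> bool" where
  "agent_typed P A \<longleftrightarrow> lang (CRE P) \<subseteq> Acp A \<and> gos_ok P"

datatype trust = TLoc | LGood | LBad

record ('a, 'l) membrane =
  Mt :: "'l \<Rightarrow> trust option"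
  Mp :: "('a, 'l) dfa"

datatype ('a, 'l) sys =
    SZero
  | Site 'l "('a, 'l) membrane" "('a, 'l) agent"
  | SPar "('a, 'l) sys" "('a, 'l) sys"

fun site_names :: "('a, 'l) sys \<Rightarrow> 'l list" where
  "site_names SZero = []"
| "site_names (Site l M P) = [l]"
| "site_names (SPar N1 N2) = site_names N1 @ site_names N2"

fun sites :: "('a, 'l) sys \<Rightarrow> ('l \<times> ('a, 'l) membrane \<times> ('a, 'l) agent) set" where
  "sites SZero = {}"
| "sites (Site l M P) = {(l, M, P)}"
| "sites (SPar N1 N2) = sites N1 \<union> sites N2"

fun agent_policies :: "('a, 'l) agent \<Rightarrow> ('a, 'l) dfa set" where
  "agent_policies ANil = {}"
| "agent_policies (APre a P) = agent_policies P"
| "agent_policies (AGo A l P) = insert A (agent_policies P)"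
| "agent_policies (APar P Q) = agent_policies P \<union> agent_policies Q"
| "agent_policies (ABang P) = agent_policies P"

fun sys_policies :: "('a, 'l) sys \<Rightarrow> ('a, 'l) dfa set" where
  "sys_policies SZero = {}"
| "sys_policies (Site l M P) = insert (Mp M) (agent_policies P)"
| "sys_policies (SPar N1 N2) = sys_policies N1 \<union> sys_policies N2"

definition is_system :: "('a, 'l) sys \<Rightarrow> bool" where
  "is_system N \<longleftrightarrow> distinct (site_names N) \<and> (\<forall>A\<in>sys_policies N. policy A)"

inductive agent_equiv :: "('a, 'l) agent \<Rightarrow> ('a, 'l) agent \<Rightarrow> bool" where
  ae_refl: "agent_equiv P P"
| ae_sym: "agent_equiv P Q \<Longrightarrow> agent_equiv Q P"
| ae_trans: "agent_equiv P Q \<Longrightarrow> agent_equiv Q R \<Longrightarrow> agent_equiv P R"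
| ae_comm: "agent_equiv (APar P Q) (APar Q P)"
| ae_assoc: "agent_equiv (APar (APar P Q) R) (APar P (APar Q R))"
| ae_unit: "agent_equiv (APar P ANil) P"
| ae_pre: "agent_equiv P Q \<Longrightarrow> agent_equiv (APre a P) (APre a Q)"
| ae_go: "agent_equiv P Q \<Longrightarrow> agent_equiv (AGo A l P) (AGo A l Q)"
| ae_par: "agent_equiv P P' \<Longrightarrow> agent_equiv Q Q' \<Longrightarrow> agent_equiv (APar P Q) (APar P' Q')"
| ae_bang: "agent_equiv P Q \<Longrightarrow> agent_equiv (ABang P) (ABang Q)"

inductive sys_equiv :: "('a, 'l) sys \<Rightarrow> ('a, 'l) sys \<Rightarrow> bool" where
  se_refl: "sys_equiv N N"
| se_sym: "sys_equiv N N' \<Longrightarrow> sys_equiv N' N"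
| se_trans: "sys_equiv N1 N2 \<Longrightarrow> sys_equiv N2 N3 \<Longrightarrow> sys_equiv N1 N3"
| se_site: "agent_equiv P Q \<Longrightarrow> sys_equiv (Site l M P) (Site l M Q)"
| se_bang: "sys_equiv (Site l M (APar (ABang P) Q)) (Site l M (APar P (APar (ABang P) Q)))"
| se_par: "sys_equiv N1 N1' \<Longrightarrow> sys_equiv N2 N2' \<Longrightarrow> sys_equiv (SPar N1 N2) (SPar N1' N2')"
| se_comm: "sys_equiv (SPar N1 N2) (SPar N2 N1)"
| se_assoc: "sys_equiv (SPar (SPar N1 N2) N3) (SPar N1 (SPar N2 N3))"
| se_unit: "sys_equiv (SPar N SZero) N"

definition mig_ok :: "'l \<Rightarrow> ('a, 'l) dfa \<Rightarrow> ('a, 'l) agent \<Rightarrow> ('a, 'l) membrane \<Rightarrow> bool" where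
  "mig_ok k A P Ml \<longleftrightarrow>
     (if Mt Ml k = Some LGood then Acp A \<subseteq> Acp (Mp Ml) else agent_typed P (Mp Ml))"

inductive red :: "('a, 'l) sys \<Rightarrow> ('a, 'l) sys \<Rightarrow> bool" where
  r_act: "red (Site l M (APar (APre a P) Q)) (Site l M (APar P Q))"
| r_par: "red N1 N1' \<Longrightarrow> red (SPar N1 N2) (SPar N1' N2)"
| r_struct: "sys_equiv N N1 \<Longrightarrow> red N1 N1' \<Longrightarrow> sys_equiv N1' N' \<Longrightarrow> red N N'"
| r_mig: "mig_ok k A P Ml \<Longrightarrow>
    red (SPar (Site k Mk (APar (AGo A l P) Q)) (Site l Ml R))
        (SPar (Site k Mk Q) (Site l Ml (APar P R)))"

definition trust_le :: "trust \<Rightarrow> trust \<Rightarrow> bool" where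
  "trust_le x y \<longleftrightarrow> x = y \<or> (x = TLoc \<and> (y = LBad \<or> y = LGood))"

definition trustworthy_in :: "'l \<Rightarrow> ('a, 'l) membrane \<Rightarrow> bool" where
  "trustworthy_in k M \<longleftrightarrow> Mt M k = Some LGood"

definition coherent :: "('a, 'l) sys \<Rightarrow> bool" where
  "coherent N \<longleftrightarrow>
     (\<forall>k Mk Pk l Ml Pl t. (k, Mk, Pk) \<in> sites N \<and> trustworthy_in k Mk
        \<and> (l, Ml, Pl) \<in> sites N \<and> Mt Mk l = Some t
        \<longrightarrow> (\<exists>t'. Mt Ml l = Some t' \<and> trust_le t t'))"

fun threads :: "('a, 'l) agent \<Rightarrow> ('a, 'l) agent list" where
  "threads (APar P Q) = threads P @ threads Q"
| "threads P = [P]"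

fun sys_ok :: "('a, 'l) sys \<Rightarrow> bool" where
  "sys_ok SZero = True"
| "sys_ok (SPar N1 N2) = (sys_ok N1 \<and> sys_ok N2)"
| "sys_ok (Site l M P) =
     (trustworthy_in l M \<longrightarrow>
       (\<forall>Pi\<in>set (threads P).
          (\<exists>s\<in>states (Mp M). lang (CRE Pi) \<subseteq> Acp_from (Mp M) s) \<and> gos_ok Pi))"

end

theory Submission imports Defs begin

inductive il :: "'b list \<Rightarrow> 'b list \<Rightarrow> 'b list \<Rightarrow> bool" where
  il_nil: "il [] [] []"
| il_l: "il xs ys zs \<Longrightarrow> il (x#xs) ys (x#zs)"
| il_r: "il xs ys zs \<Longrightarrow> il xs (y#ys) (y#zs)"

lemma il_comm: "il xs ys zs \<Longrightarrow> il ys xs zs"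
  by (induction rule: il.induct) (auto intro: il.intros)

lemma il_left_app: "il xs ys zs \<Longrightarrow> il (p@xs) ys (p@zs)"
  by (induction p) (auto intro: il.intros)

lemma il_right_app: "il xs ys zs \<Longrightarrow> il xs (p@ys) (p@zs)"
  by (induction p) (auto intro: il.intros)

lemma il_app: "il xs ys (xs@ys)"
proof -
  have "il [] ys ys" by (induction ys) (auto intro: il.intros)
  from il_left_app[OF this] show ?thesis by simp
qed

lemma il_app2: "il xs ys (ys@xs)"
  using il_app[of ys xs] il_comm by blast

lemma il_Nil2_aux: "il xs ys zs \<Longrightarrow> ys = [] \<Longrightarrow> zs = xs"
  by (induction rule: il.induct) auto

lemma il_Nil2: "il xs [] zs \<longleftrightarrow> zs = xs"
  using il_Nil2_aux il_app[of xs "[]"] by auto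

lemma il_Cons_inv: "il u v (a#zs) \<Longrightarrow> (\<exists>u'. u = a#u' \<and> il u' v zs) \<or> (\<exists>v'. v = a#v' \<and> il u v' zs)"
  by (erule il.cases) auto

lemma il_assoc: "il w x z \<Longrightarrow> il u v w \<Longrightarrow> \<exists>t. il v x t \<and> il u t z"
proof (induction w x z arbitrary: u v rule: il.induct)
  case il_nil
  then have "u = []" "v = []" by (auto elim: il.cases)
  then show ?case by (auto intro: il.intros)
next
  case (il_l xs ys zs a)
  from il_Cons_inv[OF il_l.prems] show ?case
  proof
    assume "\<exists>u'. u = a#u' \<and> il u' v xs"
    then obtain u' where h: "u = a#u'" "il u' v xs" by blast
    from il_l.IH[OF h(2)] obtain t where "il v ys t" "il u' t zs" by blast
    then show ?thesis using h by (auto intro: il.intros)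
  next
    assume "\<exists>v'. v = a#v' \<and> il u v' xs"
    then obtain v' where h: "v = a#v'" "il u v' xs" by blast
    from il_l.IH[OF h(2)] obtain t where "il v' ys t" "il u t zs" by blast
    then show ?thesis using h by (auto intro: il.intros)
  qed
next
  case (il_r xs ys zs y)
  from il_r.IH[OF il_r.prems] obtain t where "il v ys t" "il u t zs" by blast
  then show ?case by (auto intro: il.intros)
qed

lemma il_assoc2: "il u w z \<Longrightarrow> il v x w \<Longrightarrow> \<exists>t. il u v t \<and> il t x z"
proof -
  assume a: "il u w z" "il v x w"
  from il_assoc[OF il_comm[OF a(1)] il_comm[OF a(2)]] obtain t where
    "il v u t" "il x t z" by blast
  then show ?thesis using il_comm by blast
qed

definition sh :: "'b list set \<Rightarrow> 'b list set \<Rightarrow> 'b list set" where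
  "sh L1 L2 = {z. \<exists>u\<in>L1. \<exists>v\<in>L2. il u v z}"

lemma blocks_il: "length xs = length ys \<Longrightarrow> il (concat xs) (concat ys) (concat (map2 (@) xs ys))"
proof (induction xs ys rule: list_induct2)
  case Nil then show ?case by (simp add: il.intros)
  case (Cons x xs y ys)
  then show ?case using il_left_app[OF il_right_app[OF Cons(2), of y], of x] by simp
qed

lemma il_blocks: "il u v z \<Longrightarrow> \<exists>xs ys. length xs = length ys \<and> concat xs = u \<and> concat ys = v \<and> concat (map2 (@) xs ys) = z"
proof (induction rule: il.induct)
  case il_nil
  then show ?case by (intro exI[of _ "[]"]) simp
next
  case (il_l xs ys zs x)
  then obtain as bs where "length as = length bs" "concat as = xs" "concat bs = ys" "concat (map2 (@) as bs) = zs" by blast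
  then show ?case by (intro exI[of _ "[x]#as"] exI[of _ "[]#bs"]) simp
next
  case (il_r xs ys zs x)
  then obtain as bs where "length as = length bs" "concat as = xs" "concat bs = ys" "concat (map2 (@) as bs) = zs" by blast
  then show ?case by (intro exI[of _ "[]#as"] exI[of _ "[x]#bs"]) simp
qed

lemma shuffle_lang_sh: "shuffle_lang L1 L2 = sh L1 L2"
  unfolding shuffle_lang_def sh_def
  using blocks_il il_blocks by fastforce

lemma sh_comm: "sh L1 L2 = sh L2 L1"
  unfolding sh_def using il_comm by blast

lemma sh_unit: "sh L {[]} = L"
  unfolding sh_def by (auto simp: il_Nil2)

lemma sh_assoc: "sh (sh L1 L2) L3 = sh L1 (sh L2 L3)"
  unfolding sh_def
  apply (auto)
  apply (meson il_assoc)
  apply (meson il_assoc2)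
  done

lemma lang_nonempty: "lang e \<noteq> {}"
proof (induction e)
  case (CShuf e1 e2)
  then show ?case by (auto simp: shuffle_lang_sh sh_def intro: il_app)
next
  case (CStar e)
  have "[] \<in> shuf_pow (lang e) 0" by simp
  then show ?case by (auto simp del: shuf_pow.simps)
qed auto


lemma equiv_lang: "agent_equiv P Q \<Longrightarrow> lang (CRE P) = lang (CRE Q)"
proof (induction rule: agent_equiv.induct)
  case (ae_comm P Q) then show ?case by (simp add: shuffle_lang_sh sh_comm)
next
  case (ae_assoc P Q R) then show ?case by (simp add: shuffle_lang_sh sh_assoc)
next
  case (ae_unit P) then show ?case by (simp add: shuffle_lang_sh sh_unit)
qed (simp_all add: shuffle_lang_sh)

lemma equiv_gos: "agent_equiv P Q \<Longrightarrow> gos_ok P = gos_ok Q"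
  by (induction rule: agent_equiv.induct) (auto simp: equiv_lang)

definition nilike :: "('a,'l) agent \<Rightarrow> bool" where
  "nilike P \<longleftrightarrow> lang (CRE P) = {[]} \<and> gos_ok P"

definition tsim :: "('a,'l) agent \<Rightarrow> ('a,'l) agent \<Rightarrow> bool" where
  "tsim P Q \<longleftrightarrow> (\<forall>Pi\<in>set (threads P). nilike Pi \<or>
     (\<exists>Qi\<in>set (threads Q). lang (CRE Pi) = lang (CRE Qi) \<and> gos_ok Pi = gos_ok Qi))"

lemma tsim_trans: "tsim P Q \<Longrightarrow> tsim Q R \<Longrightarrow> tsim P R"
  unfolding tsim_def nilike_def by metis

lemma tsim_refl: "tsim P P"
  unfolding tsim_def by blast

lemma tsim_sub: "set (threads P) \<subseteq> set (threads Q) \<Longrightarrow> tsim P Q"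
  unfolding tsim_def by blast

lemma tsim_single: "threads P = [P] \<Longrightarrow> threads Q = [Q] \<Longrightarrow> lang (CRE P) = lang (CRE Q) \<Longrightarrow> gos_ok P = gos_ok Q \<Longrightarrow> tsim P Q"
  unfolding tsim_def by simp

lemma equiv_tsim: "agent_equiv P Q \<Longrightarrow> tsim P Q \<and> tsim Q P"
proof (induction rule: agent_equiv.induct)
  case (ae_refl P) then show ?case by (simp add: tsim_refl)
next
  case (ae_sym P Q) then show ?case by simp
next
  case (ae_trans P Q R) then show ?case using tsim_trans by blast
next
  case (ae_comm P Q) then show ?case by (auto intro: tsim_sub)
next
  case (ae_assoc P Q R) then show ?case by (auto intro: tsim_sub)
next
  case (ae_unit P) then show ?case
    by (auto simp: tsim_def nilike_def intro: tsim_sub)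
next
  case (ae_pre P Q a) then show ?case
    using equiv_lang[OF ae_pre.hyps] equiv_gos[OF ae_pre.hyps]
    by (auto intro!: tsim_single)
next
  case (ae_go P Q A l) then show ?case
    using equiv_lang[OF ae_go.hyps] equiv_gos[OF ae_go.hyps]
    by (auto intro!: tsim_single)
next
  case (ae_bang P Q) then show ?case
    using equiv_lang[OF ae_bang.hyps] equiv_gos[OF ae_bang.hyps]
    by (auto intro!: tsim_single)
next
  case (ae_par P P' Q Q') then show ?case
    unfolding tsim_def by auto
qed

definition allok :: "('a,'l) dfa \<Rightarrow> ('a,'l) agent \<Rightarrow> bool" where
  "allok D P \<longleftrightarrow> (\<forall>Pi\<in>set (threads P).
          (\<exists>s\<in>states D. lang (CRE Pi) \<subseteq> Acp_from D s) \<and> gos_ok Pi)"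

lemma nilike_ok: "is_dfa D \<Longrightarrow> nilike Pi \<Longrightarrow> (\<exists>s\<in>states D. lang (CRE Pi) \<subseteq> Acp_from D s) \<and> gos_ok Pi"
  unfolding nilike_def is_dfa_def Acp_from_def by auto

lemma tsim_allok: "is_dfa D \<Longrightarrow> tsim P Q \<Longrightarrow> allok D Q \<Longrightarrow> allok D P"
  unfolding allok_def tsim_def using nilike_ok by metis

lemma foldl_states: "is_dfa D \<Longrightarrow> s \<in> states D \<Longrightarrow> y \<in> lists (alpha D) \<Longrightarrow> foldl (delta D) s y \<in> states D"
  by (induction y arbitrary: s) (auto simp: is_dfa_def)

lemma Acp_from_app: "y @ x \<in> Acp_from D s \<longleftrightarrow> y \<in> lists (alpha D) \<and> x \<in> Acp_from D (foldl (delta D) s y)"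
  unfolding Acp_from_def by auto

lemma split_ok: "is_dfa D \<Longrightarrow> s \<in> states D \<Longrightarrow> lang (CRE P) \<subseteq> Acp_from D s \<Longrightarrow> gos_ok P \<Longrightarrow> allok D P"
proof (induction P arbitrary: s)
  case (APar P1 P2)
  obtain y where y: "y \<in> lang (CRE P2)" using lang_nonempty by blast
  obtain x where x: "x \<in> lang (CRE P1)" using lang_nonempty by blast
  have 1: "lang (CRE P1) \<subseteq> Acp_from D (foldl (delta D) s y)"
  proof
    fix w assume "w \<in> lang (CRE P1)"
    then have "y @ w \<in> lang (CRE (APar P1 P2))" using y il_app2 by (auto simp: shuffle_lang_sh sh_def)
    then show "w \<in> Acp_from D (foldl (delta D) s y)" using APar.prems Acp_from_app by blast
  qed
  have "y @ x \<in> lang (CRE (APar P1 P2))" using x y il_app2 by (auto simp: shuffle_lang_sh sh_def)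
  then have h1s: "foldl (delta D) s y \<in> states D" using APar.prems Acp_from_app foldl_states by blast
  have 2: "lang (CRE P2) \<subseteq> Acp_from D (foldl (delta D) s x)"
  proof
    fix w assume "w \<in> lang (CRE P2)"
    then have "x @ w \<in> lang (CRE (APar P1 P2))" using x il_app by (auto simp: shuffle_lang_sh sh_def)
    then show "w \<in> Acp_from D (foldl (delta D) s x)" using APar.prems Acp_from_app by blast
  qed
  have "x @ y \<in> lang (CRE (APar P1 P2))" using x y il_app by (auto simp: shuffle_lang_sh sh_def)
  then have h2s: "foldl (delta D) s x \<in> states D" using APar.prems Acp_from_app foldl_states by blast
  have "allok D P1" using APar.IH(1)[OF APar.prems(1) h1s 1] APar.prems(4) by simp
  moreover have "allok D P2" using APar.IH(2)[OF APar.prems(1) h2s 2] APar.prems(4) by simp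
  ultimately show ?case unfolding allok_def by auto
qed (auto simp: allok_def)


definition sp :: "('a,'l) sys \<Rightarrow> ('l \<times> ('a,'l) membrane) set" where
  "sp N = (\<lambda>(l,M,P). (l,M)) ` sites N"

definition wf :: "('a,'l) sys \<Rightarrow> bool" where
  "wf N \<longleftrightarrow> (\<forall>x\<in>sp N. is_dfa (Mp (snd x)))"

definition coh :: "('l \<times> ('a,'l) membrane) set \<Rightarrow> bool" where
  "coh S \<longleftrightarrow> (\<forall>k Mk l Ml t. (k, Mk) \<in> S \<and> trustworthy_in k Mk
        \<and> (l, Ml) \<in> S \<and> Mt Mk l = Some t
        \<longrightarrow> (\<exists>t'. Mt Ml l = Some t' \<and> trust_le t t'))"

lemma coherent_coh: "coherent N = coh (sp N)"
  unfolding coherent_def coh_def sp_def by (auto; force)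

lemma sp_simps[simp]: "sp SZero = {}" "sp (Site l M P) = {(l,M)}" "sp (SPar N1 N2) = sp N1 \<union> sp N2"
  unfolding sp_def by (simp_all add: image_Un)

lemma wf_simps[simp]: "wf (Site l M P) = is_dfa (Mp M)" "wf (SPar N1 N2) = (wf N1 \<and> wf N2)"
  unfolding wf_def by auto

lemma sys_ok_site: "sys_ok (Site l M P) = (trustworthy_in l M \<longrightarrow> allok (Mp M) P)"
  by (simp add: allok_def)

declare sys_ok.simps(3)[simp del]

lemma bang_ok: "is_dfa D \<Longrightarrow> allok D (APar (ABang P) Q) = allok D (APar P (APar (ABang P) Q))"
proof
  assume d: "is_dfa D" and a: "allok D (APar (ABang P) Q)"
  then obtain s where s: "s \<in> states D" "lang (CRE (ABang P)) \<subseteq> Acp_from D s" "gos_ok P"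
    by (auto simp: allok_def)
  have "shuf_pow (lang (CRE P)) 1 = lang (CRE P)"
    by (simp add: shuffle_lang_sh sh_comm sh_unit)
  then have "lang (CRE P) \<subseteq> lang (CRE (ABang P))"
    apply (simp only: CRE.simps lang.simps) by blast
  then have "allok D P" using split_ok[OF d s(1) _ s(3)] s(2) by blast
  then show "allok D (APar P (APar (ABang P) Q))" using a unfolding allok_def by auto
next
  assume "allok D (APar P (APar (ABang P) Q))"
  then show "allok D (APar (ABang P) Q)" unfolding allok_def by auto
qed

lemma equiv_inv: "sys_equiv N N' \<Longrightarrow> sp N = sp N' \<and> (wf N \<longrightarrow> sys_ok N = sys_ok N')"
proof (induction rule: sys_equiv.induct)
  case (se_site P Q l M)
  then show ?case using equiv_tsim[OF se_site] tsim_allok by (simp add: sys_ok_site) blast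
next
  case (se_bang l M P Q)
  then show ?case using bang_ok by (auto simp: sys_ok_site)
qed (auto simp: wf_def)

lemma red_inv: "red N N' \<Longrightarrow> sp N' = sp N \<and> (\<forall>S. sp N \<subseteq> S \<longrightarrow> coh S \<longrightarrow> wf N \<longrightarrow> sys_ok N \<longrightarrow> sys_ok N')"
proof (induction rule: red.induct)
  case (r_act l M a P Q)
  have "allok (Mp M) (APar P Q)" if d: "is_dfa (Mp M)" and a: "allok (Mp M) (APar (APre a P) Q)"
  proof -
    from a obtain s where s: "s \<in> states (Mp M)" "lang (CRE (APre a P)) \<subseteq> Acp_from (Mp M) s" "gos_ok P"
      by (auto simp: allok_def)
    obtain x where x: "x \<in> lang (CRE P)" using lang_nonempty by blast
    have "[SAct a] @ x \<in> Acp_from (Mp M) s" using s(2) x by auto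
    then have st: "foldl (delta (Mp M)) s [SAct a] \<in> states (Mp M)"
      using Acp_from_app foldl_states[OF d s(1)] by blast
    have "lang (CRE P) \<subseteq> Acp_from (Mp M) (foldl (delta (Mp M)) s [SAct a])"
    proof
      fix w assume "w \<in> lang (CRE P)"
      then have "[SAct a] @ w \<in> Acp_from (Mp M) s" using s(2) by auto
      then show "w \<in> Acp_from (Mp M) (foldl (delta (Mp M)) s [SAct a])" using Acp_from_app by blast
    qed
    from split_ok[OF d st this s(3)] a show ?thesis unfolding allok_def by auto
  qed
  then show ?case by (auto simp: sys_ok_site)
next
  case (r_par N1 N1' N2)
  then show ?case by auto
next
  case (r_struct N N1 N1' N')
  then show ?case using equiv_inv wf_def by metis
next
  case (r_mig k A P Ml Mk l Q R)
  have "sys_ok (SPar (Site k Mk Q) (Site l Ml (APar P R)))"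
    if S: "sp (SPar (Site k Mk (APar (AGo A l P) Q)) (Site l Ml R)) \<subseteq> S" "coh S"
      and w: "wf (SPar (Site k Mk (APar (AGo A l P) Q)) (Site l Ml R))"
      and ok: "sys_ok (SPar (Site k Mk (APar (AGo A l P) Q)) (Site l Ml R))" for S
  proof -
    have okk: "trustworthy_in k Mk \<longrightarrow> allok (Mp Mk) Q"
      using ok by (simp add: sys_ok_site allok_def)
    have "allok (Mp Ml) (APar P R)" if tl: "trustworthy_in l Ml"
    proof -
      have dl: "is_dfa (Mp Ml)" using w by simp
      have R: "allok (Mp Ml) R" using ok tl by (simp add: sys_ok_site)
      have P: "lang (CRE P) \<subseteq> Acp (Mp Ml) \<and> gos_ok P"
      proof (cases "Mt Ml k = Some LGood")
        case True
        with r_mig.hyps have inc: "Acp A \<subseteq> Acp (Mp Ml)" by (simp add: mig_ok_def)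
        from S True tl have "\<exists>t'. Mt Mk k = Some t' \<and> trust_le LGood t'"
          unfolding coh_def by auto
        then have "trustworthy_in k Mk" by (auto simp: trust_le_def trustworthy_in_def)
        then have "gos_ok (AGo A l P)" using ok by (auto simp: sys_ok_site allok_def)
        then show ?thesis using inc by auto
      next
        case False
        with r_mig.hyps show ?thesis by (simp add: mig_ok_def agent_typed_def)
      qed
      have "init (Mp Ml) \<in> states (Mp Ml)" using dl by (simp add: is_dfa_def)
      from split_ok[OF dl this] P have "allok (Mp Ml) P" by (simp add: Acp_def)
      with R show ?thesis unfolding allok_def by auto
    qed
    with okk show ?thesis by (simp add: sys_ok_site)
  qed
  then show ?case by auto
qed

lemma sites_pol: "(l, M, P) \<in> sites N \<Longrightarrow> Mp M \<in> sys_policies N"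
  by (induction N) auto

theorem mainTheorem7:
  fixes N N' :: "('a, 'l) sys"
  assumes "is_system N"
    and "coherent N"
    and "sys_ok N"
    and "red N N'"
  shows "coherent N' \<and> sys_ok N'"
proof -
  have w: "wf N" using assms(1) sites_pol
    unfolding wf_def sp_def is_system_def minimal_dfa_def by fastforce
  from red_inv[OF assms(4)] have "sp N' = sp N" and
    "\<forall>S. sp N \<subseteq> S \<longrightarrow> coh S \<longrightarrow> wf N \<longrightarrow> sys_ok N \<longrightarrow> sys_ok N'" by auto
  then have "sys_ok N'" using assms(2,3) w coherent_coh by blast
  moreover have "coherent N'" using assms(2) coherent_coh \<open>sp N' = sp N\<close> by metis
  ultimately show ?thesis by blast
qed

end
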